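(* Let $n\in\mathbb N$ and let $X\subseteq[0,1]$ be an arbitrary subset. Then the set $$Y_n(X):=\{\mathbf y\in S:\ \operatorname{rint}I_j(\mathbf y)\not\subseteq X\ \text{for } j=0,1,\dots,n\}$$ is open and pathwise connected. In particular, the regularity set $Y$ associated with any $n$-field function $J$ and any singular kernel functions $K_1,\dots,K_n$ is open and pathwise connected.
   Context: $S=\{\mathbf y\in\mathbb R^n:0<y_1<\dots<y_n<1\}$. Set $y_0:=0$ and $y_{n+1}:=1$, and let $I_j(\mathbf y)=[y_j,y_{j+1}]$ for $j=0,\dots,n$. $\operatorname{rint}$ denotes the interior relative to $[0,1]$; thus $\operatorname{rint}I_0(\mathbf y)=[0,y_1)$, $\operatorname{rint}I_n(\mathbf y)=(y_n,1]$, and $\operatorname{rint}I_j(\mathbf y)=(y_j,y_{j+1})$ for $0<j<n$. For singular kernel functions $K_1,\dots,K_n$ (concave on $(-1,0)$ and on $(0,1)$, with $\lim_{t\to0}K_i(t)=-\infty$) and an $n$-field function $J:[0,1]\to[-\infty,\infty)$, the regularity set is $Y=\{\mathbf y\in S:\sup_{t\in I_j(\mathbf y)}\bigl(J(t)+\sum_iK_i(t-y_i)\bigr)\neq-\infty\ \forall j\}$. This set equals $Y_n(X)$ with $X=\{t\in[0,1]:J(t)=-\infty\}$. An $n$-field function is bounded above, and its set of finite values has total weight greater than $n$, where $0$ and $1$ have weight $1/2$ and interior points have weight $1$. *)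

theory Defs
  imports "HOL-Analysis.Analysis"
begin

text \<open>Points of R^n are modelled as functions nat => real vanishing outside {1..n};
  the topology is the product topology on nat => real restricted to this subspace
  (which is homeomorphic to Euclidean R^n).\<close>

definition Rn :: "nat \<Rightarrow> (nat \<Rightarrow> real) set" where
  "Rn n = {y. \<forall>k. k \<notin> {1..n} \<longrightarrow> y k = 0}"

definition yext :: "nat \<Rightarrow> (nat \<Rightarrow> real) \<Rightarrow> nat \<Rightarrow> real" where
  "yext n y j = (if j = 0 then 0 else if j = n + 1 then 1 else y j)"

definition simplexS :: "nat \<Rightarrow> (nat \<Rightarrow> real) set" where
  "simplexS n = {y \<in> Rn n. \<forall>j\<le>n. yext n y j < yext n y (j + 1)}"

definition Ij :: "nat \<Rightarrow> (nat \<Rightarrow> real) \<Rightarrow> nat \<Rightarrow> real set" where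
  "Ij n y j = {yext n y j .. yext n y (j + 1)}"

definition rintIj :: "nat \<Rightarrow> (nat \<Rightarrow> real) \<Rightarrow> nat \<Rightarrow> real set" where
  "rintIj n y j = (top_of_set {0..1}) interior_of (Ij n y j)"

definition Yn :: "nat \<Rightarrow> real set \<Rightarrow> (nat \<Rightarrow> real) set" where
  "Yn n X = {y \<in> simplexS n. \<forall>j\<le>n. \<not> (rintIj n y j \<subseteq> X)}"

definition singular_kernel :: "(real \<Rightarrow> ereal) \<Rightarrow> bool" where
  "singular_kernel K \<longleftrightarrow>
     (\<forall>t\<in>{-1<..<0} \<union> {0<..<1}. \<bar>K t\<bar> \<noteq> \<infinity>) \<and>
     concave_on {-1<..<0} (\<lambda>t. real_of_ereal (K t)) \<and>
     concave_on {0<..<1} (\<lambda>t. real_of_ereal (K t)) \<and>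
     K 0 = -\<infinity> \<and> (K \<longlongrightarrow> -\<infinity>) (at 0)"

definition pt_weight :: "real \<Rightarrow> ereal" where
  "pt_weight t = (if t = 0 \<or> t = 1 then 1/2 else 1)"

definition set_weight :: "real set \<Rightarrow> ereal" where
  "set_weight A = (if finite A then (\<Sum>t\<in>A. pt_weight t) else \<infinity>)"

definition nfield :: "nat \<Rightarrow> (real \<Rightarrow> ereal) \<Rightarrow> bool" where
  "nfield n J \<longleftrightarrow>
     (\<forall>t\<in>{0..1}. J t \<noteq> \<infinity>) \<and>
     (\<exists>M::real. \<forall>t\<in>{0..1}. J t \<le> ereal M) \<and>
     set_weight {t\<in>{0..1}. J t \<noteq> -\<infinity>} > ereal (real n)"

definition regY :: "nat \<Rightarrow> (real \<Rightarrow> ereal) \<Rightarrow> (nat \<Rightarrow> real \<Rightarrow> ereal) \<Rightarrow> (nat \<Rightarrow> real) set" where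
  "regY n J K = {y \<in> simplexS n. \<forall>j\<le>n.
      (SUP t\<in>Ij n y j. J t + (\<Sum>i=1..n. K i (t - y i))) \<noteq> -\<infinity>}"

end

theory Submission imports Defs begin

lemma yext_mono:
  assumes "y \<in> simplexS n" "i < k" "k \<le> n+1"
  shows "yext n y i < yext n y k"
  using assms(2,3)
proof (induction k)
  case 0 then show ?case by simp
next
  case (Suc k)
  have st: "yext n y k < yext n y (Suc k)" using assms(1) Suc.prems unfolding simplexS_def by auto
  show ?case
  proof (cases "i = k")
    case True then show ?thesis using st by simp
  next
    case False then have "yext n y i < yext n y k" using Suc by auto
    then show ?thesis using st by simp
  qed
qed

lemma yext_bounds:
  assumes "y \<in> simplexS n" "j \<le> n+1"
  shows "0 \<le> yext n y j \<and> yext n y j \<le> 1"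
proof -
  have "yext n y 0 \<le> yext n y j" using yext_mono[OF assms(1), of 0 j] assms(2) by (cases "j = 0") auto
  moreover have "yext n y j \<le> yext n y (n+1)" using yext_mono[OF assms(1), of j "n+1"] assms(2) by (cases "j = n+1") auto
  ultimately show ?thesis by (simp add: yext_def)
qed

lemma rint_char:
  assumes y: "y \<in> simplexS n" and j: "j \<le> n"
  shows "rintIj n y j = {t. 0 \<le> t \<and> t \<le> 1 \<and> (j = 0 \<or> yext n y j < t) \<and> (j = n \<or> t < yext n y (j+1))}"
    (is "_ = ?R")
proof -
  define a where "a = yext n y j"
  define b where "b = yext n y (j+1)"
  have ab: "a < b" using yext_mono[OF y, of j "j+1"] j by (simp add: a_def b_def)
  have a0: "0 \<le> a" "a \<le> 1" using yext_bounds[OF y, of j] j by (auto simp: a_def)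
  have b0: "0 \<le> b" "b \<le> 1" using yext_bounds[OF y, of "j+1"] j by (auto simp: b_def)
  have apos: "j \<noteq> 0 \<Longrightarrow> 0 < a"
    using yext_mono[OF y, of 0 j] j by (simp add: a_def yext_def)
  have blt: "j \<noteq> n \<Longrightarrow> b < 1"
    using yext_mono[OF y, of "j+1" "n+1"] j by (simp add: b_def yext_def)
  have a00: "j = 0 \<Longrightarrow> a = 0" by (simp add: a_def yext_def)
  have b11: "j = n \<Longrightarrow> b = 1" by (simp add: b_def yext_def)
  have Ij: "Ij n y j = {a..b}" by (simp add: Ij_def a_def b_def)
  show ?thesis
  proof
    show "?R \<subseteq> rintIj n y j"
    proof -
      define U where "U = {t::real. (j = 0 \<or> a < t) \<and> (j = n \<or> t < b)}"
      have oU: "open U"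
      proof -
        have "U = (if j = 0 then UNIV else {a<..}) \<inter> (if j = n then UNIV else {..<b})"
          by (auto simp: U_def)
        then show ?thesis by auto
      qed
      have "openin (top_of_set {0..1}) ({0..1} \<inter> U)" using oU by auto
      moreover have "?R = {0..1} \<inter> U" by (auto simp: U_def a_def b_def)
      moreover have "?R \<subseteq> Ij n y j" using ab a0 b0 a00 b11 unfolding Ij a_def[symmetric] b_def[symmetric]
        by auto
      ultimately show ?thesis unfolding rintIj_def interior_of_def by auto
    qed
  next
    show "rintIj n y j \<subseteq> ?R"
    proof
      fix t assume "t \<in> rintIj n y j"
      then obtain T where T: "openin (top_of_set {0..1}) T" "t \<in> T" "T \<subseteq> {a..b}"
        unfolding rintIj_def interior_of_def Ij by auto
      have T01: "T \<subseteq> {0..1}" using T(1) by (simp add: openin_euclidean_subtopology_iff)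
      obtain e where e: "e > 0" "\<And>x'. x' \<in> {0..1} \<Longrightarrow> dist x' t < e \<Longrightarrow> x' \<in> T"
        using T(1,2) unfolding openin_euclidean_subtopology_iff by blast
      have 1: "j = 0 \<or> a < t"
      proof (rule ccontr)
        assume "\<not> ?thesis"
        then have "j \<noteq> 0" "t = a" using T by auto
        define s where "s = a - min (e/2) (a/2)"
        have m: "min (e/2) (a/2) \<le> a/2" "min (e/2) (a/2) \<le> e/2" "min (e/2) (a/2) > 0"
          using e apos[OF \<open>j\<noteq>0\<close>] by (auto simp: min_def)
        then have "s \<in> T" using e apos[OF \<open>j\<noteq>0\<close>] a0 \<open>t = a\<close> by (intro e(2)) (auto simp: s_def dist_real_def)
        then have "a \<le> s" using T(3) by auto
        then show False using m by (simp add: s_def)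
      qed
      have 2: "j = n \<or> t < b"
      proof (rule ccontr)
        assume "\<not> ?thesis"
        then have "j \<noteq> n" "t = b" using T by auto
        define s where "s = b + min (e/2) ((1-b)/2)"
        have m: "min (e/2) ((1-b)/2) \<le> (1-b)/2" "min (e/2) ((1-b)/2) \<le> e/2" "min (e/2) ((1-b)/2) > 0"
          using e blt[OF \<open>j\<noteq>n\<close>] by (auto simp: min_def)
        then have "s \<in> T" using e blt[OF \<open>j\<noteq>n\<close>] b0 \<open>t = b\<close> by (intro e(2)) (auto simp: s_def dist_real_def)
        then have "s \<le> b" using T(3) by auto
        then show False using m by (simp add: s_def)
      qed
      show "t \<in> ?R" using 1 2 T01 T(2) by (auto simp: a_def b_def)
    qed
  qed
qed

definition good :: "nat \<Rightarrow> real set \<Rightarrow> (nat \<Rightarrow> real) \<Rightarrow> bool" where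
  "good n X z \<longleftrightarrow> (\<forall>j\<le>n. 0 \<le> z j \<and> z j \<le> 1 \<and> z j \<notin> X) \<and> (\<forall>j<n. z j < z (Suc j))"

definition box :: "nat \<Rightarrow> (nat \<Rightarrow> real) \<Rightarrow> (nat \<Rightarrow> real) set" where
  "box n z = {y \<in> Rn n. \<forall>j\<in>{1..n}. z (j-1) < y j \<and> y j < z j}"

lemma box_sub:
  assumes g: "good n X z" and y: "y \<in> box n z"
  shows "y \<in> Yn n X"
proof -
  have yR: "y \<in> Rn n" and yb: "\<And>j. 1 \<le> j \<Longrightarrow> j \<le> n \<Longrightarrow> z (j-1) < y j \<and> y j < z j"
    using y by (auto simp: box_def)
  have lo: "\<And>j. j \<le> n \<Longrightarrow> yext n y j \<le> z j \<and> (j = 0 \<or> yext n y j < z j)"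
  proof -
    fix j assume "j \<le> n"
    then show "yext n y j \<le> z j \<and> (j = 0 \<or> yext n y j < z j)"
      using g yb[of j] by (cases "j = 0") (auto simp: yext_def good_def)
  qed
  have hi: "\<And>j. j \<le> n \<Longrightarrow> z j \<le> yext n y (j+1) \<and> (j = n \<or> z j < yext n y (j+1))"
  proof -
    fix j assume "j \<le> n"
    then show "z j \<le> yext n y (j+1) \<and> (j = n \<or> z j < yext n y (j+1))"
      using g yb[of "j+1"] by (cases "j = n") (auto simp: yext_def good_def)
  qed
  have S: "y \<in> simplexS n"
  proof -
    have "yext n y j < yext n y (j + 1)" if "j \<le> n" for j
    proof (cases "n = 0")
      case True then show ?thesis using that by (simp add: yext_def)
    next
      case False
      show ?thesis
      proof (cases "j = 0")
        case True
        then show ?thesis using lo[of 0] hi[of 0] False by auto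
      next
        case False
        then show ?thesis using lo[of j] hi[of j] that by auto
      qed
    qed
    then show ?thesis using yR by (simp add: simplexS_def)
  qed
  have "z j \<in> rintIj n y j" if "j \<le> n" for j
  proof -
    have "0 \<le> z j \<and> z j \<le> 1" using g that by (simp add: good_def)
    then show ?thesis using lo[OF that] hi[OF that] unfolding rint_char[OF S that] by simp
  qed
  moreover have "z j \<notin> X" if "j \<le> n" for j using g that by (simp add: good_def)
  ultimately have "\<forall>j\<le>n. \<not> rintIj n y j \<subseteq> X" by blast
  then show ?thesis using S unfolding Yn_def by simp
qed

lemma Yn_cover:
  assumes y: "y \<in> Yn n X"
  shows "\<exists>z. good n X z \<and> y \<in> box n z"
proof -
  have S: "y \<in> simplexS n" using y by (simp add: Yn_def)
  have "\<forall>j. \<exists>t. j \<le> n \<longrightarrow> t \<in> rintIj n y j \<and> t \<notin> X" using y by (auto simp: Yn_def)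
  then obtain z where z: "\<And>j. j \<le> n \<Longrightarrow> z j \<in> rintIj n y j \<and> z j \<notin> X" by metis
  have zc: "\<And>j. j \<le> n \<Longrightarrow> 0 \<le> z j \<and> z j \<le> 1 \<and> (j = 0 \<or> yext n y j < z j) \<and> (j = n \<or> z j < yext n y (j+1))"
  proof -
    fix j assume j: "j \<le> n"
    have "z j \<in> rintIj n y j" using z[OF j] by simp
    then show "0 \<le> z j \<and> z j \<le> 1 \<and> (j = 0 \<or> yext n y j < z j) \<and> (j = n \<or> z j < yext n y (j+1))"
      unfolding rint_char[OF S j] by simp
  qed
  have "good n X z"
  proof -
    have "z j < z (Suc j)" if "j < n" for j
      using zc[of j] zc[of "Suc j"] that by auto
    then show ?thesis using zc z by (auto simp: good_def)
  qed
  moreover have "y \<in> box n z"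
  proof -
    have "z (j-1) < y j \<and> y j < z j" if "1 \<le> j" "j \<le> n" for j
    proof -
      have e: "j - 1 + 1 = j" using that by simp
      have "z (j-1) < yext n y j" using zc[of "j-1"] that e by auto
      moreover have "yext n y j < z j" using zc[of j] that by auto
      moreover have "yext n y j = y j" using that by (simp add: yext_def)
      ultimately show ?thesis by simp
    qed
    then show ?thesis using S by (auto simp: box_def simplexS_def)
  qed
  ultimately show ?thesis by blast
qed

lemma box_openin: "openin (top_of_set (Rn n)) (box n z)"
proof -
  define U where "U = (\<Inter>j\<in>{1..n}. (\<lambda>f::nat\<Rightarrow>real. f j) -` {z (j-1)<..<z j})"
  have "open ((\<lambda>f::nat\<Rightarrow>real. f j) -` {z (j-1)<..<z j})" for j
    by (rule open_vimage) auto
  then have "open U" unfolding U_def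
    by (intro open_INT) auto
  moreover have "box n z = Rn n \<inter> U" unfolding box_def U_def by (simp add: set_eq_iff)
  ultimately show ?thesis by auto
qed

lemma Yn_open: "openin (top_of_set (Rn n)) (Yn n X)"
proof -
  have "\<exists>T. openin (top_of_set (Rn n)) T \<and> y \<in> T \<and> T \<subseteq> Yn n X" if y: "y \<in> Yn n X" for y
  proof -
    obtain z where z: "good n X z" "y \<in> box n z" using Yn_cover[OF y] by blast
    have "box n z \<subseteq> Yn n X" using box_sub[OF z(1)] by blast
    then show ?thesis using box_openin[of n z] z(2) by blast
  qed
  then show ?thesis by (subst openin_subopen) blast
qed

lemma cvx_lo:
  fixes c x y t :: real
  assumes "c < x" "c < y" "0 \<le> t" "t \<le> 1"
  shows "c < (1-t)*x + t*y"
proof -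
  have 1: "(1-t)*c \<le> (1-t)*x" using assms by (intro mult_left_mono) auto
  have 2: "t*c \<le> t*y" using assms by (intro mult_left_mono) auto
  have 3: "(1-t)*c + t*c = c" by (simp add: algebra_simps)
  show ?thesis
  proof (cases "t = 0")
    case True then show ?thesis using assms by simp
  next
    case False
    then have "t*c < t*y" using assms by simp
    then show ?thesis using 1 3 by linarith
  qed
qed

lemma cvx_hi:
  fixes c x y t :: real
  assumes "x < c" "y < c" "0 \<le> t" "t \<le> 1"
  shows "(1-t)*x + t*y < c"
  using cvx_lo[of "-c" "-x" "-y" t] assms by (simp add: algebra_simps)

lemma box_path:
  assumes a: "a \<in> box n z" and b: "b \<in> box n z" and sub: "box n z \<subseteq> S"
  shows "path_component S a b"
proof -
  define g where "g = (\<lambda>(t::real) (j::nat). (1-t)*a j + t*b j)"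
  have "path g" unfolding path_def g_def
    by (intro continuous_on_coordinatewise_then_product continuous_intros)
  moreover have "path_image g \<subseteq> box n z"
  proof
    fix p assume "p \<in> path_image g"
    then obtain t where t: "0 \<le> t" "t \<le> 1" "p = g t" by (auto simp: path_image_def)
    have "p \<in> Rn n" using a b t by (auto simp: box_def Rn_def g_def)
    moreover have "z (j-1) < p j \<and> p j < z j" if "j \<in> {1..n}" for j
    proof -
      have "z (j-1) < a j" "a j < z j" "z (j-1) < b j" "b j < z j" using a b that by (auto simp: box_def)
      then show ?thesis using cvx_lo[of "z (j-1)" "a j" "b j" t] cvx_hi[of "a j" "z j" "b j" t] t
        by (simp add: g_def)
    qed
    ultimately show "p \<in> box n z" by (simp add: box_def)
  qed
  moreover have "pathstart g = a" "pathfinish g = b" by (simp_all add: pathstart_def pathfinish_def g_def)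
  ultimately show ?thesis unfolding path_component_def using sub by blast
qed

definition mid :: "nat \<Rightarrow> (nat \<Rightarrow> real) \<Rightarrow> nat \<Rightarrow> real" where
  "mid n z j = (if j \<in> {1..n} then (z (j-1) + z j)/2 else 0)"

lemma mid_box:
  assumes "good n X z" shows "mid n z \<in> box n z"
proof -
  have "z (j-1) < z j" if "j \<in> {1..n}" for j
  proof -
    have "j - 1 < n" "Suc (j - 1) = j" using that by auto
    then show ?thesis using assms unfolding good_def by metis
  qed
  then show ?thesis by (auto simp: box_def mid_def Rn_def)
qed

lemma adj:
  assumes ga: "good n X a" and gb: "good n X b"
    and h: "\<And>j. j \<in> {1..n} \<Longrightarrow> a (j-1) < b j \<and> b (j-1) < a j"
  shows "path_component (Yn n X) (mid n a) (mid n b)"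
proof -
  define p where "p = (\<lambda>j. if j \<in> {1..n} then (max (a (j-1)) (b (j-1)) + min (a j) (b j))/2 else 0)"
  have aa: "a (j-1) < a j" "b (j-1) < b j" if "j \<in> {1..n}" for j
    using mid_box[OF ga] mid_box[OF gb] that by (auto simp: box_def mid_def)
  have pj: "max (a (j-1)) (b (j-1)) < p j \<and> p j < min (a j) (b j)" if "j \<in> {1..n}" for j
  proof -
    have "a (j-1) < b j" "b (j-1) < a j" "a (j-1) < a j" "b (j-1) < b j"
      using h[OF that] aa[OF that] by auto
    then show ?thesis using that unfolding p_def by (auto simp add: max_def min_def)
  qed
  have pR: "p \<in> Rn n" by (simp add: p_def Rn_def)
  have "p \<in> box n a" "p \<in> box n b"
    using pj pR unfolding box_def by auto
  moreover have "box n a \<subseteq> Yn n X" "box n b \<subseteq> Yn n X" using box_sub ga gb by blast+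
  ultimately have "path_component (Yn n X) (mid n a) p" "path_component (Yn n X) p (mid n b)"
    using box_path[OF mid_box[OF ga], of p] box_path[OF _ mid_box[OF gb], of p] by simp_all
  then show ?thesis by (rule path_component_trans)
qed

lemma chain:
  assumes gz: "good n X z" and gw: "good n X w" and le: "\<And>j. j \<le> n \<Longrightarrow> w j \<le> z j"
  shows "path_component (Yn n X) (mid n z) (mid n w)"
proof -
  define u where "u k = (\<lambda>j. if j < k then w j else z j)" for k
  have inc: "w j < w (Suc j)" "z j < z (Suc j)" if "j < n" for j
    using gz gw that unfolding good_def by auto
  have gu: "good n X (u k)" for k
  proof -
    have "u k j < u k (Suc j)" if "j < n" for j
      using inc[OF that] le[of j] that unfolding u_def by auto
    moreover have "0 \<le> u k j \<and> u k j \<le> 1 \<and> u k j \<notin> X" if "j \<le> n" for j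
      using gz gw that unfolding good_def u_def by auto
    ultimately show ?thesis unfolding good_def by blast
  qed
  have step: "path_component (Yn n X) (mid n (u k)) (mid n (u (Suc k)))" for k
  proof (rule adj[OF gu gu])
    fix j assume j: "j \<in> {1..n}"
    have "j - 1 < n" and sj: "Suc (j-1) = j" using j by auto
    then have f: "w (j-1) < w j" "z (j-1) < z j" using inc[of "j-1"] by (simp_all add: sj)
    have g: "w j \<le> z j" "w (j-1) \<le> z (j-1)" using le j by auto
    show "u k (j - 1) < u (Suc k) j \<and> u (Suc k) (j - 1) < u k j"
      using f g j unfolding u_def by auto
  qed
  have "k \<le> Suc n \<Longrightarrow> path_component (Yn n X) (mid n z) (mid n (u k))" for k
  proof (induction k)
    case 0
    have "u 0 = z" by (simp add: u_def)
    moreover have "mid n z \<in> Yn n X" using box_sub[OF gz mid_box[OF gz]] .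
    ultimately show ?case by (simp add: path_component_refl)
  next
    case (Suc k)
    then have "path_component (Yn n X) (mid n z) (mid n (u k))" by simp
    then show ?case using step[of k] by (rule path_component_trans)
  qed
  moreover have "mid n (u (Suc n)) = mid n w"
    by (rule ext) (auto simp: mid_def u_def)
  ultimately show ?thesis by (metis order_refl)
qed

lemma box_subset: "good n X z \<Longrightarrow> box n z \<subseteq> Yn n X"
  using box_sub by blast

lemma Yn_pc: "path_connected (Yn n X)"
  unfolding path_connected_component
proof (intro ballI)
  fix y y' assume y: "y \<in> Yn n X" and y': "y' \<in> Yn n X"
  obtain z where z: "good n X z" "y \<in> box n z" using Yn_cover[OF y] by blast
  obtain z' where z': "good n X z'" "y' \<in> box n z'" using Yn_cover[OF y'] by blast
  define w where "w = (\<lambda>j. min (z j) (z' j))"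
  have gw: "good n X w"
  proof -
    have "w j < w (Suc j)" if "j < n" for j
      using z(1) z'(1) that unfolding good_def w_def by (auto simp: min_def)
    moreover have "0 \<le> w j \<and> w j \<le> 1 \<and> w j \<notin> X" if "j \<le> n" for j
      using z(1) z'(1) that unfolding good_def w_def by (auto simp: min_def)
    ultimately show ?thesis unfolding good_def by blast
  qed
  have p1: "path_component (Yn n X) y (mid n z)"
    using box_path[OF z(2) mid_box[OF z(1)] box_subset[OF z(1)]] by blast
  have p2: "path_component (Yn n X) (mid n z) (mid n w)"
    using chain[OF z(1) gw] by (simp add: w_def)
  have p3: "path_component (Yn n X) (mid n w) (mid n z')"
    using path_component_sym[OF chain[OF z'(1) gw]] by (simp add: w_def)
  have p4: "path_component (Yn n X) (mid n z') y'"
    using box_path[OF mid_box[OF z'(1)] z'(2) box_subset[OF z'(1)]] by blast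
  show "path_component (Yn n X) y y'"
    using path_component_trans[OF path_component_trans[OF path_component_trans[OF p1 p2] p3] p4] .
qed

lemma ereal_add_minf: "(a::ereal) \<noteq> \<infinity> \<Longrightarrow> a + -\<infinity> = -\<infinity>"
  by (cases a) auto

lemma ereal_minf_add: "(a::ereal) \<noteq> \<infinity> \<Longrightarrow> -\<infinity> + a = -\<infinity>"
  by (cases a) auto

lemma sum_minf:
  fixes f :: "'a \<Rightarrow> ereal"
  assumes "finite A" "i \<in> A" "f i = -\<infinity>" "\<And>x. x \<in> A \<Longrightarrow> f x \<noteq> \<infinity>"
  shows "sum f A = -\<infinity>"
  using assms
proof (induction A rule: finite_induct)
  case empty then show ?case by simp
next
  case (insert x A)
  have nA: "sum f A \<noteq> \<infinity>" using insert.prems(3) insert.hyps(1) by (auto simp: sum_Pinfty)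
  show ?case
  proof (cases "x = i")
    case True
    then show ?thesis using insert nA by (simp add: ereal_minf_add)
  next
    case False
    then have "sum f A = -\<infinity>" using insert by auto
    then show ?thesis using insert by (simp add: ereal_add_minf)
  qed
qed

lemma y_in01:
  assumes y: "y \<in> simplexS n" and i: "i \<in> {1..n}"
  shows "0 < y i \<and> y i < 1"
proof -
  have "yext n y 0 < yext n y i" "yext n y i < yext n y (n+1)"
    using yext_mono[OF y, of 0 i] yext_mono[OF y, of i "n+1"] i by auto
  then show ?thesis using i by (simp add: yext_def)
qed

lemma regY_eq:
  assumes J: "nfield n J" and K: "\<forall>i\<in>{1..n}. singular_kernel (K i)"
  shows "regY n J K = Yn n {t\<in>{0..1}. J t = -\<infinity>}"
proof -
  define X' where "X' = {t\<in>{0..1}. J t = -\<infinity>}"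
  define F where "F y t = J t + (\<Sum>i=1..n. K i (t - y i))" for y t
  have Jfin: "J t \<noteq> \<infinity>" if "t \<in> {0..1}" for t using J that by (simp add: nfield_def)
  have Kv: "K i (t - y i) \<noteq> \<infinity> \<and> (t \<noteq> y i \<longrightarrow> \<bar>K i (t - y i)\<bar> \<noteq> \<infinity>) \<and> (t = y i \<longrightarrow> K i (t - y i) = -\<infinity>)"
    if y: "y \<in> simplexS n" and i: "i \<in> {1..n}" and t: "t \<in> {0..1}" for y i t
  proof -
    have sk: "singular_kernel (K i)" using K i by blast
    have yi: "0 < y i" "y i < 1" using y_in01[OF y i] by auto
    have r: "t - y i \<in> {-1<..<0} \<union> {0<..<1}" if "t \<noteq> y i" using that yi t by auto
    show ?thesis
    proof (cases "t = y i")
      case True then show ?thesis using sk by (simp add: singular_kernel_def)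
    next
      case False
      have "\<bar>K i (t - y i)\<bar> \<noteq> \<infinity>" by (rule bspec[OF conjunct1[OF sk[unfolded singular_kernel_def]] r[OF False]])
      then show ?thesis using False by auto
    qed
  qed
  have key: "(SUP t\<in>Ij n y j. F y t) \<noteq> -\<infinity> \<longleftrightarrow> \<not> rintIj n y j \<subseteq> X'"
    if y: "y \<in> simplexS n" and j: "j \<le> n" for y j
  proof
    assume ns: "\<not> rintIj n y j \<subseteq> X'"
    then obtain t where t: "t \<in> rintIj n y j" "t \<notin> X'" by blast
    have tc: "0 \<le> t \<and> t \<le> 1 \<and> (j = 0 \<or> yext n y j < t) \<and> (j = n \<or> t < yext n y (j+1))"
      using t(1) unfolding rint_char[OF y j] by simp
    have tI: "t \<in> Ij n y j" by (rule subsetD[OF interior_of_subset t(1)[unfolded rintIj_def]])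
    have Jt: "\<bar>J t\<bar> \<noteq> \<infinity>" using t(2) tc Jfin[of t] by (auto simp: X'_def)
    have tne: "t \<noteq> y i" if i: "i \<in> {1..n}" for i
    proof (cases "i \<le> j")
      case True
      then have "j \<noteq> 0" using i by auto
      have "yext n y i \<le> yext n y j" using yext_mono[OF y, of i j] True j by (cases "i = j") auto
      then show ?thesis using tc \<open>j \<noteq> 0\<close> i by (auto simp: yext_def split: if_splits)
    next
      case False
      then have "j \<noteq> n" using i by auto
      have "yext n y (j+1) \<le> yext n y i" using yext_mono[OF y, of "j+1" i] False i by (cases "j+1 = i") auto
      then show ?thesis using tc \<open>j \<noteq> n\<close> i by (auto simp: yext_def split: if_splits)
    qed
    have "\<bar>(\<Sum>i=1..n. K i (t - y i))\<bar> \<noteq> \<infinity>"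
      using Kv[OF y _ ] tc tne by (simp add: sum_Inf)
    then have "F y t \<noteq> -\<infinity>" using Jt unfolding F_def by auto
    moreover have "F y t \<le> (SUP t\<in>Ij n y j. F y t)" using tI by (rule SUP_upper)
    ultimately show "(SUP t\<in>Ij n y j. F y t) \<noteq> -\<infinity>" by auto
  next
    assume ns: "(SUP t\<in>Ij n y j. F y t) \<noteq> -\<infinity>"
    show "\<not> rintIj n y j \<subseteq> X'"
    proof
      assume sub: "rintIj n y j \<subseteq> X'"
      have "F y t = -\<infinity>" if tI: "t \<in> Ij n y j" for t
      proof -
        have ab: "yext n y j \<le> t" "t \<le> yext n y (j+1)" using tI by (auto simp: Ij_def)
        have t01: "t \<in> {0..1}" using ab yext_bounds[OF y, of j] yext_bounds[OF y, of "j+1"] j by auto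
        have sumnf: "(\<Sum>i=1..n. K i (t - y i)) \<noteq> \<infinity>"
          using Kv[OF y _ t01] by (simp add: sum_Pinfty)
        show ?thesis
        proof (cases "t \<in> rintIj n y j")
          case True
          then have "J t = -\<infinity>" using sub by (auto simp: X'_def)
          then show ?thesis using sumnf unfolding F_def by (simp add: ereal_minf_add)
        next
          case False
          then have "(j \<noteq> 0 \<and> t = yext n y j) \<or> (j \<noteq> n \<and> t = yext n y (j+1))"
            using t01 ab unfolding rint_char[OF y j] by auto
          then have "\<exists>i\<in>{1..n}. t = y i"
          proof
            assume a: "j \<noteq> 0 \<and> t = yext n y j"
            then have "j \<in> {1..n}" "t = y j" using j by (auto simp: yext_def)
            then show ?thesis by blast
          next
            assume a: "j \<noteq> n \<and> t = yext n y (j+1)"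
            then have "j+1 \<in> {1..n}" "t = y (j+1)" using j by (auto simp: yext_def)
            then show ?thesis by blast
          qed
          then obtain i where i: "i \<in> {1..n}" "t = y i" by blast
          have "(\<Sum>i=1..n. K i (t - y i)) = -\<infinity>"
            using Kv[OF y _ t01] i by (intro sum_minf[of _ i]) auto
          then show ?thesis using Jfin[OF t01] unfolding F_def by (simp add: ereal_add_minf)
        qed
      qed
      then have "(SUP t\<in>Ij n y j. F y t) \<le> -\<infinity>" by (intro SUP_least) simp
      then have "(SUP t\<in>Ij n y j. F y t) = -\<infinity>" by simp
      then show False using ns by simp
    qed
  qed
  have "(y \<in> simplexS n \<and> (\<forall>j\<le>n. (SUP t\<in>Ij n y j. J t + (\<Sum>i=1..n. K i (t - y i))) \<noteq> -\<infinity>)) =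
        (y \<in> simplexS n \<and> (\<forall>j\<le>n. \<not> rintIj n y j \<subseteq> X'))" for y
  proof (cases "y \<in> simplexS n")
    case True
    have "((SUP t\<in>Ij n y j. J t + (\<Sum>i=1..n. K i (t - y i))) \<noteq> -\<infinity>) = (\<not> rintIj n y j \<subseteq> X')" if "j \<le> n" for j
      using key[OF True that] unfolding F_def .
    then show ?thesis using True by simp
  qed simp
  then show ?thesis
    unfolding regY_def Yn_def X'_def[symmetric] by (intro Collect_cong)
qed

theorem proposition4p1:
  fixes n :: nat and X :: "real set"
  assumes "X \<subseteq> {0..1}"
  shows "openin (top_of_set (Rn n)) (Yn n X) \<and> path_connected (Yn n X) \<and>
    (\<forall>(J :: real \<Rightarrow> ereal) (K :: nat \<Rightarrow> real \<Rightarrow> ereal).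
       nfield n J \<and> (\<forall>i\<in>{1..n}. singular_kernel (K i)) \<longrightarrow>
       openin (top_of_set (Rn n)) (regY n J K) \<and> path_connected (regY n J K))"
proof (intro conjI allI impI)
  fix J :: "real \<Rightarrow> ereal" and K :: "nat \<Rightarrow> real \<Rightarrow> ereal"
  assume h: "nfield n J \<and> (\<forall>i\<in>{1..n}. singular_kernel (K i))"
  then have e: "regY n J K = Yn n {t\<in>{0..1}. J t = -\<infinity>}" using regY_eq by blast
  show "openin (top_of_set (Rn n)) (regY n J K)" unfolding e by (rule Yn_open)
  show "path_connected (regY n J K)" unfolding e by (rule Yn_pc)
qed (rule Yn_open, rule Yn_pc)

end
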